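(* There is a theory $\mathcal{T}$ — for instance the theory whose domain is the integers $\mathbb{Z}$, with integer constants, increment ($x+1$), decrement ($x-1$) and equality — for which the following problem is undecidable: given a TSL($\mathcal{T}$) formula $\phi$ over finite sets $R$ of state variables and $I$ of input variables, decide whether $\phi$ is realizable, i.e. whether there exists a theory Mealy machine realizing $\phi$. In other words, the synthesis problem for TSL modulo theories is undecidable.
   Context: A theory $\mathcal{T}$ consists of a signature (constants, functions, predicates) with a fixed interpretation over a domain $\mathbb{T}$. For a set of variables $V$, $E^{\mathbb{T}}_{\mathcal{T}}(V)$ denotes the terms and $E^{\mathbb{B}}_{\mathcal{T}}(V)$ the formulas of $\mathcal{T}$ with free variables in $V$. Let $R$ be a finite set of state variables and $I$ a finite set of input variables; valuations are $\mathbf{R}=R\to\mathbb{T}$ and $\mathbf{I}=I\to\mathbb{T}$. An update function $\mathbf{u}$ assigns to each $r\in R$ a term $\mathbf{u}(r)\in E^{\mathbb{T}}_{\mathcal{T}}(R\cup I)$; $\mathbf{U}$ is the set of update functions, and $\mathbf{u}[\mathbf{r},\mathbf{i}]\in\mathbf{R}$ is given by $\mathbf{u}[\mathbf{r},\mathbf{i}](r)=$ the value of $\mathbf{u}(r)$ under $\mathbf{r},\mathbf{i}$. TSL($\mathcal{T}$) formulas are generated by: atomic propositions $p\in E^{\mathbb{B}}_{\mathcal{T}}(R\cup I)$; update atoms $[r\leftarrow e]$ with $r\in R$, $e\in E^{\mathbb{T}}_{\mathcal{T}}(R\cup I)$; $\mathrm{true}$, $\mathrm{false}$; $\neg\phi$,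 $\phi\wedge\psi$, $\phi\,\mathbf{U}\,\psi$, $\mathbf{X}\phi$ (with $\mathbf{F}\phi=\mathrm{true}\,\mathbf{U}\,\phi$, $\mathbf{G}\phi=\neg\mathbf{F}\neg\phi$). Semantics over traces $\rho=\rho_0\rho_1\cdots\in(\mathbf{R}\times\mathbf{I})^\omega$, $\rho_j=(\mathbf{r}_j,\mathbf{i}_j)$: $\rho\models p$ iff $(\mathbf{r}_0,\mathbf{i}_0)\models p$; $\rho\models[r\leftarrow e]$ iff $\mathbf{r}_1(r)$ equals the value of $e$ under $(\mathbf{r}_0,\mathbf{i}_0)$; Boolean and temporal operators as in LTL. A theory Mealy machine is $(Q,q_0,P,\mathbf{r}_0,\delta,\mu)$ with finite state set $Q$, initial state $q_0$, finite predicate set $P\subseteq E^{\mathbb{B}}_{\mathcal{T}}(R\cup I)$, initial valuation $\mathbf{r}_0\in\mathbf{R}$, transition function $\delta:Q\times 2^P\to Q$ and update selection $\mu:Q\times2^P\to\mathbf{U}$. For $\mathbf{v}=(\mathbf{r},\mathbf{i})$ let $P_{\mathbf{v}}=\{p\in P\mid \mathbf{v}\models p\}$. The run on input sequence $\mathbf{i}_0\mathbf{i}_1\cdots\in\mathbf{I}^\omega$ is $(q_0,\mathbf{r}_0)(q_1,\mathbf{r}_1)\cdots$ with $q_{k+1}=\delta(q_k,P_{(\mathbf{r}_k,\mathbf{i}_k)})$ and $\mathbf{r}_{k+1}=\mathbf{u}_k[\mathbf{r}_k,\mathbf{i}_k]$ where $\mathbf{u}_k=\mu(q_k,P_{(\mathbf{r}_k,\mathbf{i}_k)})$.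 The machine realizes $\phi$ if for every input sequence the induced trace $(\mathbf{r}_k,\mathbf{i}_k)_k$ satisfies $\phi$. *)

theory Defs
  imports Main "HOL-Library.Nat_Bijection"
begin

text \<open>Terms over state variables (RVar r) and input variables (IVar i);
  the two namespaces are disjoint.\<close>
datatype tm = RVar nat | IVar nat | Cst int | Inc tm | Dec tm

datatype pf = PTrue | PEq tm tm | PNot pf | PAnd pf pf

type_synonym val = "nat \<Rightarrow> int"

primrec teval :: "val \<Rightarrow> val \<Rightarrow> tm \<Rightarrow> int" where
  "teval r i (RVar x) = r x"
| "teval r i (IVar x) = i x"
| "teval r i (Cst c) = c"
| "teval r i (Inc t) = teval r i t + 1"
| "teval r i (Dec t) = teval r i t - 1"

primrec peval :: "val \<Rightarrow> val \<Rightarrow> pf \<Rightarrow> bool" where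
  "peval r i PTrue = True"
| "peval r i (PEq s t) = (teval r i s = teval r i t)"
| "peval r i (PNot p) = (\<not> peval r i p)"
| "peval r i (PAnd p q) = (peval r i p \<and> peval r i q)"

primrec tm_over :: "nat set \<Rightarrow> nat set \<Rightarrow> tm \<Rightarrow> bool" where
  "tm_over R I (RVar x) = (x \<in> R)"
| "tm_over R I (IVar x) = (x \<in> I)"
| "tm_over R I (Cst c) = True"
| "tm_over R I (Inc t) = tm_over R I t"
| "tm_over R I (Dec t) = tm_over R I t"

primrec pf_over :: "nat set \<Rightarrow> nat set \<Rightarrow> pf \<Rightarrow> bool" where
  "pf_over R I PTrue = True"
| "pf_over R I (PEq s t) = (tm_over R I s \<and> tm_over R I t)"
| "pf_over R I (PNot p) = pf_over R I p"
| "pf_over R I (PAnd p q) = (pf_over R I p \<and> pf_over R I q)"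

datatype tsl = Atom pf | Upd nat tm | TT | FF | Neg tsl | Conj tsl tsl
  | Until tsl tsl | Next tsl

primrec tsl_over :: "nat set \<Rightarrow> nat set \<Rightarrow> tsl \<Rightarrow> bool" where
  "tsl_over R I (Atom p) = pf_over R I p"
| "tsl_over R I (Upd r e) = (r \<in> R \<and> tm_over R I e)"
| "tsl_over R I TT = True"
| "tsl_over R I FF = True"
| "tsl_over R I (Neg f) = tsl_over R I f"
| "tsl_over R I (Conj f g) = (tsl_over R I f \<and> tsl_over R I g)"
| "tsl_over R I (Until f g) = (tsl_over R I f \<and> tsl_over R I g)"
| "tsl_over R I (Next f) = tsl_over R I f"

primrec sat :: "(nat \<Rightarrow> val \<times> val) \<Rightarrow> nat \<Rightarrow> tsl \<Rightarrow> bool" where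
  "sat \<rho> j (Atom p) = peval (fst (\<rho> j)) (snd (\<rho> j)) p"
| "sat \<rho> j (Upd r e) = (fst (\<rho> (Suc j)) r = teval (fst (\<rho> j)) (snd (\<rho> j)) e)"
| "sat \<rho> j TT = True"
| "sat \<rho> j FF = False"
| "sat \<rho> j (Neg f) = (\<not> sat \<rho> j f)"
| "sat \<rho> j (Conj f g) = (sat \<rho> j f \<and> sat \<rho> j g)"
| "sat \<rho> j (Until f g) = (\<exists>k\<ge>j. sat \<rho> k g \<and> (\<forall>m. j \<le> m \<and> m < k \<longrightarrow> sat \<rho> m f))"
| "sat \<rho> j (Next f) = sat \<rho> (Suc j) f"

primrec mrun :: "nat \<Rightarrow> pf set \<Rightarrow> val \<Rightarrow> (nat \<Rightarrow> pf set \<Rightarrow> nat)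
    \<Rightarrow> (nat \<Rightarrow> pf set \<Rightarrow> (nat \<Rightarrow> tm)) \<Rightarrow> (nat \<Rightarrow> val) \<Rightarrow> nat \<Rightarrow> nat \<times> val" where
  "mrun q0 P r0 \<delta> \<mu> ins 0 = (q0, r0)"
| "mrun q0 P r0 \<delta> \<mu> ins (Suc k) =
     (let q = fst (mrun q0 P r0 \<delta> \<mu> ins k);
          r = snd (mrun q0 P r0 \<delta> \<mu> ins k);
          S = {p \<in> P. peval r (ins k) p}
      in (\<delta> q S, \<lambda>x. teval r (ins k) (\<mu> q S x)))"

definition is_mealy ::
  "nat set \<Rightarrow> nat set \<Rightarrow> nat set \<Rightarrow> nat \<Rightarrow> pf set \<Rightarrow> val
    \<Rightarrow> (nat \<Rightarrow> pf set \<Rightarrow> nat) \<Rightarrow> (nat \<Rightarrow> pf set \<Rightarrow> (nat \<Rightarrow> tm)) \<Rightarrow> bool" where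
  "is_mealy R I Q q0 P r0 \<delta> \<mu> \<longleftrightarrow>
     finite Q \<and> q0 \<in> Q \<and> finite P \<and> (\<forall>p\<in>P. pf_over R I p) \<and>
     (\<forall>q\<in>Q. \<forall>S. S \<subseteq> P \<longrightarrow> \<delta> q S \<in> Q \<and> (\<forall>r\<in>R. tm_over R I (\<mu> q S r)))"

definition realizes ::
  "nat \<Rightarrow> pf set \<Rightarrow> val \<Rightarrow> (nat \<Rightarrow> pf set \<Rightarrow> nat) \<Rightarrow> (nat \<Rightarrow> pf set \<Rightarrow> (nat \<Rightarrow> tm))
    \<Rightarrow> tsl \<Rightarrow> bool" where
  "realizes q0 P r0 \<delta> \<mu> \<phi> \<longleftrightarrow>
     (\<forall>ins. sat (\<lambda>k. (snd (mrun q0 P r0 \<delta> \<mu> ins k), ins k)) 0 \<phi>)"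

definition realizable :: "nat set \<Rightarrow> nat set \<Rightarrow> tsl \<Rightarrow> bool" where
  "realizable R I \<phi> \<longleftrightarrow>
     (\<exists>Q q0 P r0 \<delta> \<mu>. is_mealy R I Q q0 P r0 \<delta> \<mu> \<and> realizes q0 P r0 \<delta> \<mu> \<phi>)"

primrec enc_tm :: "tm \<Rightarrow> nat" where
  "enc_tm (RVar x) = prod_encode (0, x)"
| "enc_tm (IVar x) = prod_encode (1, x)"
| "enc_tm (Cst c) = prod_encode (2, int_encode c)"
| "enc_tm (Inc t) = prod_encode (3, enc_tm t)"
| "enc_tm (Dec t) = prod_encode (4, enc_tm t)"

primrec enc_pf :: "pf \<Rightarrow> nat" where
  "enc_pf PTrue = prod_encode (0, 0)"
| "enc_pf (PEq s t) = prod_encode (1, prod_encode (enc_tm s, enc_tm t))"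
| "enc_pf (PNot p) = prod_encode (2, enc_pf p)"
| "enc_pf (PAnd p q) = prod_encode (3, prod_encode (enc_pf p, enc_pf q))"

primrec enc_tsl :: "tsl \<Rightarrow> nat" where
  "enc_tsl (Atom p) = prod_encode (0, enc_pf p)"
| "enc_tsl (Upd r e) = prod_encode (1, prod_encode (r, enc_tm e))"
| "enc_tsl TT = prod_encode (2, 0)"
| "enc_tsl FF = prod_encode (3, 0)"
| "enc_tsl (Neg f) = prod_encode (4, enc_tsl f)"
| "enc_tsl (Conj f g) = prod_encode (5, prod_encode (enc_tsl f, enc_tsl g))"
| "enc_tsl (Until f g) = prod_encode (6, prod_encode (enc_tsl f, enc_tsl g))"
| "enc_tsl (Next f) = prod_encode (7, enc_tsl f)"

definition enc_instance :: "nat list \<Rightarrow> nat list \<Rightarrow> tsl \<Rightarrow> nat" where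
  "enc_instance Rs Is \<phi> = prod_encode (list_encode Rs, prod_encode (list_encode Is, enc_tsl \<phi>))"

datatype recf = Zf | Sf | Proj nat | Comp recf "recf list" | PrimRec recf recf | Minim recf

inductive rec_eval :: "recf \<Rightarrow> nat list \<Rightarrow> nat \<Rightarrow> bool" where
  zero: "rec_eval Zf xs 0"
| succ: "rec_eval Sf (x # xs) (Suc x)"
| proj: "i < length xs \<Longrightarrow> rec_eval (Proj i) xs (xs ! i)"
| comp: "list_all2 (\<lambda>g y. rec_eval g xs y) gs ys \<Longrightarrow> rec_eval f ys z
          \<Longrightarrow> rec_eval (Comp f gs) xs z"
| prim0: "rec_eval f xs y \<Longrightarrow> rec_eval (PrimRec f g) (0 # xs) y"
| primS: "rec_eval (PrimRec f g) (n # xs) y \<Longrightarrow> rec_eval g (n # y # xs) z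
          \<Longrightarrow> rec_eval (PrimRec f g) (Suc n # xs) z"
| minim: "rec_eval f (n # xs) 0 \<Longrightarrow> (\<forall>m<n. \<exists>y. y \<noteq> 0 \<and> rec_eval f (m # xs) y)
          \<Longrightarrow> rec_eval (Minim f) xs n"

definition tsl_realizability_decidable :: bool where
  "tsl_realizability_decidable \<longleftrightarrow>
     (\<exists>f. \<forall>Rs Is \<phi>. tsl_over (set Rs) (set Is) \<phi> \<longrightarrow>
        rec_eval f [enc_instance Rs Is \<phi>] (if realizable (set Rs) (set Is) \<phi> then 1 else 0))"

end

theory Submission
  imports Defs
begin


datatype instr = IInc nat nat | IDec nat nat nat | IJz nat nat nat

fun ireg :: "instr \<Rightarrow> nat" where
  "ireg (IInc r j) = r" | "ireg (IDec r j1 j2) = r" | "ireg (IJz r j1 j2) = r"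
fun itgt :: "instr \<Rightarrow> bool \<Rightarrow> nat" where
  "itgt (IInc r j) b = j"
| "itgt (IDec r j1 j2) b = (if b then j2 else j1)"
| "itgt (IJz r j1 j2) b = (if b then j1 else j2)"
fun inew :: "instr \<Rightarrow> bool \<Rightarrow> nat \<Rightarrow> nat" where
  "inew (IInc r j) b x = Suc x" | "inew (IDec r j1 j2) b x = x - 1" | "inew (IJz r j1 j2) b x = x"

definition step :: "instr list \<Rightarrow> nat \<times> (nat \<Rightarrow> nat) \<Rightarrow> nat \<times> (nat \<Rightarrow> nat)" where
  "step P c = (if fst c < length P then
     (let ins = P ! fst c; s = snd c; b = (s (ireg ins) = 0)
      in (itgt ins b, s(ireg ins := inew ins b (s (ireg ins))))) else c)"

primrec steps :: "instr list \<Rightarrow> nat \<Rightarrow> nat \<times> (nat \<Rightarrow> nat) \<Rightarrow> nat \<times> (nat \<Rightarrow> nat)" where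
  "steps P 0 c = c" | "steps P (Suc n) c = steps P n (step P c)"

lemma steps_add: "steps P (m + n) c = steps P n (steps P m c)"
  by (induction m arbitrary: c) auto

datatype cmd = CInc nat | CDec nat | CSeq cmd cmd | CWhile nat cmd

inductive bs :: "cmd \<Rightarrow> (nat \<Rightarrow> nat) \<Rightarrow> (nat \<Rightarrow> nat) \<Rightarrow> bool" where
  bInc: "bs (CInc r) s (s(r := Suc (s r)))"
| bDec: "bs (CDec r) s (s(r := s r - 1))"
| bSeq: "bs c1 s s1 \<Longrightarrow> bs c2 s1 s2 \<Longrightarrow> bs (CSeq c1 c2) s s2"
| bW0: "s r = 0 \<Longrightarrow> bs (CWhile r c) s s"
| bW1: "s r \<noteq> 0 \<Longrightarrow> bs c s s1 \<Longrightarrow> bs (CWhile r c) s1 s2 \<Longrightarrow> bs (CWhile r c) s s2"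

fun clen :: "cmd \<Rightarrow> nat" where
  "clen (CInc r) = 1" | "clen (CDec r) = 1" | "clen (CSeq c1 c2) = clen c1 + clen c2"
| "clen (CWhile r c) = clen c + 2"

fun comp :: "cmd \<Rightarrow> nat \<Rightarrow> instr list" where
  "comp (CInc r) k = [IInc r (k+1)]"
| "comp (CDec r) k = [IDec r (k+1) (k+1)]"
| "comp (CSeq c1 c2) k = comp c1 k @ comp c2 (k + clen c1)"
| "comp (CWhile r c) k = [IJz r (k + clen c + 2) (k+1)] @ comp c (k+1) @ [IJz r k k]"

lemma len_comp[simp]: "length (comp c k) = clen c"
  by (induction c arbitrary: k) auto

definition at :: "instr list \<Rightarrow> nat \<Rightarrow> cmd \<Rightarrow> bool" where
  "at P k c \<longleftrightarrow> k + clen c \<le> length P \<and> (\<forall>i<clen c. P ! (k+i) = comp c k ! i)"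

lemma at_seq: "at P k (CSeq c1 c2) \<Longrightarrow> at P k c1 \<and> at P (k + clen c1) c2"
  unfolding at_def
proof (intro conjI allI impI)
  assume H: "k + clen (CSeq c1 c2) \<le> length P \<and> (\<forall>i<clen (CSeq c1 c2). P ! (k + i) = comp (CSeq c1 c2) k ! i)"
  show "k + clen c1 \<le> length P" using H by simp
  show "k + clen c1 + clen c2 \<le> length P" using H by simp
  fix i assume i: "i < clen c1"
  then have "P ! (k + i) = comp (CSeq c1 c2) k ! i" using H by simp
  also have "\<dots> = comp c1 k ! i" using i by (simp add: nth_append)
  finally show "P ! (k + i) = comp c1 k ! i" .
next
  assume H: "k + clen (CSeq c1 c2) \<le> length P \<and> (\<forall>i<clen (CSeq c1 c2). P ! (k + i) = comp (CSeq c1 c2) k ! i)"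
  fix i assume i: "i < clen c2"
  then have "P ! (k + (clen c1 + i)) = comp (CSeq c1 c2) k ! (clen c1 + i)" using H by simp
  also have "\<dots> = comp c2 (k + clen c1) ! i"
    using nth_append_length_plus[of "comp c1 k" "comp c2 (k + clen c1)" i] by simp
  finally show "P ! (k + clen c1 + i) = comp c2 (k + clen c1) ! i" by (simp add: add.assoc)
qed

lemma at_while: "at P k (CWhile r c) \<Longrightarrow> at P (k+1) c \<and> P ! k = IJz r (k + clen c + 2) (k+1)
   \<and> P ! (k + 1 + clen c) = IJz r k k \<and> k + clen c + 2 \<le> length P"
  unfolding at_def
proof (intro conjI allI impI)
  assume H: "k + clen (CWhile r c) \<le> length P \<and> (\<forall>i<clen (CWhile r c). P ! (k + i) = comp (CWhile r c) k ! i)"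
  show "k + 1 + clen c \<le> length P" "k + clen c + 2 \<le> length P" using H by simp_all
  show "P ! k = IJz r (k + clen c + 2) (k+1)" using H[THEN conjunct2, rule_format, of 0] by simp
  have "P ! (k + (1 + clen c)) = comp (CWhile r c) k ! (1 + clen c)" using H[THEN conjunct2, rule_format, of "1 + clen c"] by simp
  also have "\<dots> = IJz r k k"
    using nth_append_length_plus[of "IJz r (k + clen c + 2) (k+1) # comp c (k+1)" "[IJz r k k]" 0] by simp
  finally show "P ! (k + 1 + clen c) = IJz r k k" by (simp add: add.assoc)
  fix i assume i: "i < clen c"
  have "P ! (k + (1 + i)) = comp (CWhile r c) k ! (1 + i)" using H[THEN conjunct2, rule_format, of "1 + i"] i by simp
  also have "\<dots> = comp c (k+1) ! i" using i by (simp add: nth_append)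
  finally show "P ! (k + 1 + i) = comp c (k + 1) ! i" by (simp add: add.assoc)
qed

lemma comp_correct: "bs c s s' \<Longrightarrow> at P k c \<Longrightarrow> \<exists>n. steps P n (k, s) = (k + clen c, s')"
proof (induction arbitrary: k rule: bs.induct)
  case (bInc r s)
  then have "k < length P" "P ! k = IInc r (k+1)" unfolding at_def by auto
  then show ?case by (intro exI[of _ 1]) (auto simp: step_def)
next
  case (bDec r s)
  then have "k < length P" "P ! k = IDec r (k+1) (k+1)" unfolding at_def by auto
  then show ?case by (intro exI[of _ 1]) (auto simp: step_def)
next
  case (bSeq c1 s s1 c2 s2)
  from at_seq[OF bSeq.prems] bSeq.IH obtain n1 n2 where
    "steps P n1 (k, s) = (k + clen c1, s1)" "steps P n2 (k + clen c1, s1) = (k + clen c1 + clen c2, s2)"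
    by blast
  then show ?case by (intro exI[of _ "n1+n2"]) (simp add: steps_add add.assoc)
next
  case (bW0 s r c)
  from at_while[OF bW0.prems] bW0.hyps show ?case
    by (intro exI[of _ 1]) (auto simp: step_def)
next
  case (bW1 s r c s1 s2)
  note A = at_while[OF bW1.prems]
  from A bW1.hyps(1) have st1: "steps P 1 (k, s) = (k+1, s)" by (auto simp: step_def)
  from A bW1.IH(1) obtain n1 where n1: "steps P n1 (k+1, s) = (k + 1 + clen c, s1)" by blast
  from A have st2: "steps P 1 (k + 1 + clen c, s1) = (k, s1)" by (auto simp: step_def)
  from bW1.IH(2)[OF bW1.prems] obtain n2 where n2: "steps P n2 (k, s1) = (k + clen (CWhile r c), s2)" by blast
  show ?case using st1 n1 st2 n2
    by (intro exI[of _ "1 + n1 + 1 + n2"]) (simp only: steps_add)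
qed



lemma bs_eq: "bs c s s' \<Longrightarrow> s' = s'' \<Longrightarrow> bs c s s''" by simp

definition skip :: cmd where "skip = CSeq (CInc 0) (CDec 0)"
lemma bs_skip: "bs skip s s"
proof -
  have "bs skip s (s(0 := Suc (s 0), 0 := Suc (s 0) - 1))"
    unfolding skip_def by (rule bSeq[OF bInc]) (rule bs_eq[OF bDec], simp)
  then show ?thesis by simp
qed

definition clr :: "nat \<Rightarrow> cmd" where "clr r = CWhile r (CDec r)"
lemma bs_clr: "bs (clr r) s (s(r := 0))"
proof (induction "s r" arbitrary: s)
  case 0 then show ?case unfolding clr_def by (metis bW0 fun_upd_triv)
next
  case (Suc n)
  have "bs (CDec r) s (s(r := n))" using bDec[of r s] Suc.hyps(2) by (metis diff_Suc_1)
  moreover have "bs (clr r) (s(r := n)) ((s(r := n))(r := 0))" using Suc.hyps(1)[of "s(r:=n)"] by simp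
  ultimately show ?case unfolding clr_def using Suc.hyps(2)
    by (metis bW1 fun_upd_upd nat.simps(3))
qed

lemma bs_loop1:
  assumes "a \<noteq> b" "a \<noteq> t" "b \<noteq> t"
  shows "bs (CWhile a (CSeq (CDec a) (CSeq (CInc b) (CInc t)))) s (s(a := 0, b := s b + s a, t := s t + s a))"
  using assms
proof (induction "s a" arbitrary: s)
  case 0 then show ?case by (metis add_0_right bW0 fun_upd_triv)
next
  case (Suc n)
  let ?s1 = "s(a := n, b := Suc (s b), t := Suc (s t))"
  have b1: "bs (CSeq (CDec a) (CSeq (CInc b) (CInc t))) s ?s1"
    apply (rule bSeq[OF bDec])
    apply (rule bSeq[OF bInc])
    apply (rule bs_eq[OF bInc])
    using Suc.prems Suc.hyps(2) by (auto simp: fun_eq_iff)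
  have "bs (CWhile a (CSeq (CDec a) (CSeq (CInc b) (CInc t)))) ?s1
     (?s1(a := 0, b := ?s1 b + ?s1 a, t := ?s1 t + ?s1 a))"
    using Suc.hyps(1)[of ?s1] Suc.prems by simp
  moreover have "?s1(a := 0, b := ?s1 b + ?s1 a, t := ?s1 t + ?s1 a) = s(a := 0, b := s b + s a, t := s t + s a)"
    using Suc.prems Suc.hyps(2)[symmetric] by (auto simp: fun_eq_iff)
  ultimately show ?case using bW1[OF _ b1] Suc.hyps(2) by (metis nat.simps(3))
qed

lemma bs_loop2:
  assumes "a \<noteq> b"
  shows "bs (CWhile a (CSeq (CDec a) (CInc b))) s (s(a := 0, b := s b + s a))"
  using assms
proof (induction "s a" arbitrary: s)
  case 0 then show ?case by (metis add_0_right bW0 fun_upd_triv)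
next
  case (Suc n)
  let ?s1 = "s(a := n, b := Suc (s b))"
  have b1: "bs (CSeq (CDec a) (CInc b)) s ?s1"
    apply (rule bSeq[OF bDec])
    apply (rule bs_eq[OF bInc])
    using Suc.prems Suc.hyps(2) by (auto simp: fun_eq_iff)
  have "bs (CWhile a (CSeq (CDec a) (CInc b))) ?s1 (?s1(a := 0, b := ?s1 b + ?s1 a))"
    using Suc.hyps(1)[of ?s1] Suc.prems by simp
  moreover have "?s1(a := 0, b := ?s1 b + ?s1 a) = s(a := 0, b := s b + s a)"
    using Suc.prems Suc.hyps(2)[symmetric] by (auto simp: fun_eq_iff)
  ultimately show ?case using bW1[OF _ b1] Suc.hyps(2) by (metis nat.simps(3))
qed

definition addp :: "nat \<Rightarrow> nat \<Rightarrow> nat \<Rightarrow> cmd" where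
  "addp a b t = CSeq (clr t) (CSeq (CWhile a (CSeq (CDec a) (CSeq (CInc b) (CInc t))))
      (CWhile t (CSeq (CDec t) (CInc a))))"

lemma bs_addp:
  assumes "a \<noteq> b" "a \<noteq> t" "b \<noteq> t"
  shows "bs (addp a b t) s (s(b := s b + s a, t := 0))"
  unfolding addp_def
  apply (rule bSeq[OF bs_clr])
  apply (rule bSeq[OF bs_loop1])
  using assms apply auto[3]
  apply (rule bs_eq[OF bs_loop2])
  using assms by (auto simp: fun_eq_iff)

definition copy :: "nat \<Rightarrow> nat \<Rightarrow> nat \<Rightarrow> cmd" where
  "copy a b t = CSeq (clr b) (addp a b t)"

lemma bs_copy:
  assumes "a \<noteq> b" "a \<noteq> t" "b \<noteq> t"
  shows "bs (copy a b t) s (s(b := s a, t := 0))"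
  unfolding copy_def
  apply (rule bSeq[OF bs_clr])
  apply (rule bs_eq[OF bs_addp])
  using assms by (auto simp: fun_eq_iff)

primrec incs :: "nat \<Rightarrow> nat \<Rightarrow> cmd" where
  "incs r 0 = skip" | "incs r (Suc k) = CSeq (CInc r) (incs r k)"

lemma bs_incs: "bs (incs r k) s (s(r := s r + k))"
proof (induction k arbitrary: s)
  case 0 then show ?case by (simp add: bs_skip)
next
  case (Suc k)
  show ?case apply simp apply (rule bSeq[OF bInc]) apply (rule bs_eq[OF Suc.IH]) by (auto simp: fun_eq_iff)
qed

definition setc :: "nat \<Rightarrow> nat \<Rightarrow> cmd" where "setc r k = CSeq (clr r) (incs r k)"
lemma bs_setc: "bs (setc r k) s (s(r := k))"
  unfolding setc_def apply (rule bSeq[OF bs_clr]) apply (rule bs_eq[OF bs_incs]) by (auto simp: fun_eq_iff)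

lemma bs_tri:
  assumes "t1 \<noteq> d" "t1 \<noteq> t3" "d \<noteq> t3"
  shows "\<exists>s'. bs (CWhile t1 (CSeq (addp t1 d t3) (CDec t1))) s s' \<and> s' d = s d + triangle (s t1)
     \<and> (\<forall>r. r \<notin> {t1, d, t3} \<longrightarrow> s' r = s r)"
  using assms
proof (induction "s t1" arbitrary: s)
  case 0 then show ?case by (metis add_0_right bW0 triangle_0)
next
  case (Suc n)
  let ?s1 = "s(d := s d + Suc n, t3 := 0, t1 := n)"
  have b1: "bs (CSeq (addp t1 d t3) (CDec t1)) s ?s1"
    apply (rule bSeq[OF bs_addp])
    using Suc.prems apply auto[3]
    apply (rule bs_eq[OF bDec])
    using Suc.prems Suc.hyps(2)[symmetric] by (auto simp: fun_eq_iff)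
  obtain s' where s': "bs (CWhile t1 (CSeq (addp t1 d t3) (CDec t1))) ?s1 s'"
     "s' d = ?s1 d + triangle (?s1 t1)" "\<forall>r. r \<notin> {t1, d, t3} \<longrightarrow> s' r = ?s1 r"
    using Suc.hyps(1)[of ?s1] Suc.prems by auto
  show ?case
    apply (rule exI[of _ s'])
    using s' bW1[OF _ b1 s'(1)] Suc.hyps(2)[symmetric] Suc.prems by auto
qed

definition pair :: "nat \<Rightarrow> nat \<Rightarrow> nat \<Rightarrow> nat \<Rightarrow> nat \<Rightarrow> cmd" where
  "pair a b d t1 t3 = CSeq (clr t1) (CSeq (addp a t1 t3) (CSeq (addp b t1 t3)
     (CSeq (clr d) (CSeq (CWhile t1 (CSeq (addp t1 d t3) (CDec t1))) (addp a d t3)))))"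

lemma bs_pair:
  assumes "distinct [a, b, d, t1, t3]"
  shows "\<exists>s'. bs (pair a b d t1 t3) s s' \<and> s' d = prod_encode (s a, s b)
     \<and> (\<forall>r. r \<notin> {d, t1, t3} \<longrightarrow> s' r = s r)"
proof -
  let ?s1 = "s(t1 := s a + s b, t3 := 0, d := 0)"
  obtain s2 where s2: "bs (CWhile t1 (CSeq (addp t1 d t3) (CDec t1))) ?s1 s2"
    "s2 d = ?s1 d + triangle (?s1 t1)" "\<forall>r. r \<notin> {t1, d, t3} \<longrightarrow> s2 r = ?s1 r"
    using bs_tri[of t1 d t3 ?s1] assms by auto
  have "bs (pair a b d t1 t3) s (s2(d := s2 d + s2 a, t3 := 0))"
    unfolding pair_def
    apply (rule bSeq[OF bs_clr])
    apply (rule bSeq[OF bs_addp])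
    using assms apply auto[3]
    apply (rule bSeq[OF bs_addp])
    using assms apply auto[3]
    apply (rule bSeq[of _ _ "?s1"])
    apply (rule bs_eq[OF bs_clr])
    using assms apply (simp add: fun_eq_iff)
    apply (rule bSeq[OF s2(1)])
    apply (rule bs_addp)
    using assms by auto
  then show ?thesis
    apply (intro exI[of _ "s2(d := s2 d + s2 a, t3 := 0)"])
    using s2 assms by (auto simp: prod_encode_def)
qed



fun rc :: "recf \<Rightarrow> nat list \<Rightarrow> nat \<Rightarrow> nat \<Rightarrow> cmd"
and rcs :: "recf list \<Rightarrow> nat list \<Rightarrow> nat \<Rightarrow> nat \<Rightarrow> cmd" where
  "rc Zf ins out fr = clr out"
| "rc Sf ins out fr = CSeq (copy (hd ins) out fr) (CInc out)"
| "rc (Proj i) ins out fr = copy (ins ! i) out fr"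
| "rc (Comp f gs) ins out fr = CSeq (rcs gs ins fr (fr + length gs)) (rc f [fr..<fr + length gs] out (fr + length gs))"
| "rc (PrimRec f g) ins out fr =
     CSeq (rc f (tl ins) fr (fr+5)) (CSeq (clr (fr+1)) (CSeq (copy (hd ins) (fr+2) (fr+4))
       (CSeq (CWhile (fr+2) (CSeq (rc g ((fr+1) # fr # tl ins) (fr+3) (fr+5))
            (CSeq (copy (fr+3) fr (fr+4)) (CSeq (CInc (fr+1)) (CDec (fr+2))))))
         (copy fr out (fr+4)))))"
| "rc (Minim f) ins out fr =
     CSeq (clr fr) (CSeq (rc f (fr # ins) (fr+1) (fr+3))
       (CSeq (CWhile (fr+1) (CSeq (CInc fr) (rc f (fr # ins) (fr+1) (fr+3)))) (copy fr out (fr+2))))"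
| "rcs [] ins y fr = skip"
| "rcs (g # gs) ins y fr = CSeq (rc g ins y fr) (rcs gs ins (Suc y) fr)"


definition RC :: "recf \<Rightarrow> bool" where
  "RC f \<longleftrightarrow> (\<forall>xs y ins out fr s. rec_eval f xs y \<longrightarrow> map s ins = xs \<longrightarrow> set ins \<subseteq> {..<fr}
     \<longrightarrow> out < fr \<longrightarrow> out \<notin> set ins \<longrightarrow>
     (\<exists>s'. bs (rc f ins out fr) s s' \<and> s' out = y \<and> (\<forall>r<fr. r \<noteq> out \<longrightarrow> s' r = s r)))"

inductive_cases ev_Zf: "rec_eval Zf xs y"
inductive_cases ev_Sf: "rec_eval Sf xs y"
inductive_cases ev_Proj: "rec_eval (Proj i) xs y"
inductive_cases ev_Comp: "rec_eval (Comp f gs) xs y"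
inductive_cases ev_PR: "rec_eval (PrimRec f g) xs y"
inductive_cases ev_Min: "rec_eval (Minim f) xs y"

lemma RC_Zf: "RC Zf"
  unfolding RC_def
  apply (intro allI impI)
  apply (erule ev_Zf)
  apply (rule_tac x="s(out := 0)" in exI)
  by (auto intro: bs_clr)

lemma RC_Sf: "RC Sf"
  unfolding RC_def
proof (intro allI impI)
  fix xs :: "nat list" and y :: nat and ins :: "nat list" and out fr :: nat and s :: "nat \<Rightarrow> nat"
  assume ev: "rec_eval Sf xs y" and m: "map s ins = xs" and sub: "set ins \<subseteq> {..<fr}" and o: "out < fr" "out \<notin> set ins"
  from ev obtain x xs' where xs: "xs = x # xs'" "y = Suc x" by (rule ev_Sf) auto
  with m obtain a ins' where ins: "ins = a # ins'" "s a = x" by (cases ins) auto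
  have d: "a \<noteq> out" "a \<noteq> fr" "out \<noteq> fr" using ins sub o by auto
  have "bs (rc Sf ins out fr) s (s(out := s a, fr := 0, out := Suc (s a)))"
    using ins d by (auto intro!: bSeq[OF bs_copy] bs_eq[OF bInc])
  then show "\<exists>s'. bs (rc Sf ins out fr) s s' \<and> s' out = y \<and> (\<forall>r<fr. r \<noteq> out \<longrightarrow> s' r = s r)"
    using xs ins d by (intro exI) auto
qed

lemma RC_Proj: "RC (Proj i)"
  unfolding RC_def
proof (intro allI impI)
  fix xs :: "nat list" and y :: nat and ins :: "nat list" and out fr :: nat and s :: "nat \<Rightarrow> nat"
  assume ev: "rec_eval (Proj i) xs y" and m: "map s ins = xs" and sub: "set ins \<subseteq> {..<fr}" and o: "out < fr" "out \<notin> set ins"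
  from ev have i: "i < length xs" "y = xs ! i" by (auto elim: rec_eval.cases)
  have a: "ins ! i \<in> set ins" "s (ins ! i) = y" using i m by auto
  have d: "ins ! i \<noteq> out" "ins ! i \<noteq> fr" "out \<noteq> fr" using a sub o by auto
  have "bs (rc (Proj i) ins out fr) s (s(out := s (ins ! i), fr := 0))"
    using d by (auto intro: bs_copy)
  then show "\<exists>s'. bs (rc (Proj i) ins out fr) s s' \<and> s' out = y \<and> (\<forall>r<fr. r \<noteq> out \<longrightarrow> s' r = s r)"
    using a d by (intro exI) auto
qed

lemma RCs:
  assumes "\<forall>g\<in>set gs. RC g"
  shows "list_all2 (\<lambda>g y. rec_eval g xs y) gs ys \<Longrightarrow> map s ins = xs \<Longrightarrow> set ins \<subseteq> {..<y0}
   \<Longrightarrow> y0 + length gs \<le> F \<Longrightarrow>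
   \<exists>s'. bs (rcs gs ins y0 F) s s' \<and> map s' [y0..<y0 + length gs] = ys
      \<and> (\<forall>r<F. r \<notin> {y0..<y0 + length gs} \<longrightarrow> s' r = s r)"
  using assms
proof (induction gs arbitrary: ys y0 s)
  case Nil then show ?case by (auto intro: bs_skip)
next
  case (Cons g gs)
  from Cons.prems(1) obtain v vs where ys: "ys = v # vs" "rec_eval g xs v"
    "list_all2 (\<lambda>g y. rec_eval g xs y) gs vs" by (cases ys) auto
  have "RC g" using Cons.prems by simp
  then obtain s1 where s1: "bs (rc g ins y0 F) s s1" "s1 y0 = v" "\<forall>r<F. r \<noteq> y0 \<longrightarrow> s1 r = s r"
  proof -
    have "set ins \<subseteq> {..<F}" "y0 < F" "y0 \<notin> set ins" using Cons.prems(3,4) by auto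
    then show ?thesis using that ys(2) Cons.prems(2) \<open>RC g\<close> unfolding RC_def by blast
  qed
  have m1: "map s1 ins = xs"
  proof -
    have "s1 x = s x" if "x \<in> set ins" for x
    proof -
      have "x < y0" using that Cons.prems(3) by auto
      then show ?thesis using s1(3) Cons.prems(4) by simp
    qed
    then show ?thesis using Cons.prems(2) by auto
  qed
  obtain s2 where s2: "bs (rcs gs ins (Suc y0) F) s1 s2" "map s2 [Suc y0..<Suc y0 + length gs] = vs"
      "\<forall>r<F. r \<notin> {Suc y0..<Suc y0 + length gs} \<longrightarrow> s2 r = s1 r"
  proof -
    have "set ins \<subseteq> {..<Suc y0}" "Suc y0 + length gs \<le> F" "\<forall>g\<in>set gs. RC g"
      using Cons.prems(3,4,5) by auto
    from Cons.IH[OF ys(3) m1 this(1) this(2) this(3)] show ?thesis using that by blast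
  qed
  have "s2 y0 = v" using s2(3) s1(2) Cons.prems(4) by auto
  then have "map s2 [y0..<y0 + length (g # gs)] = ys"
  proof -
    have "[y0..<y0 + length (g # gs)] = y0 # [Suc y0..<Suc y0 + length gs]"
      by (simp add: upt_conv_Cons del: upt_Suc)
    then show ?thesis using s2(2) ys(1) \<open>s2 y0 = v\<close> by simp
  qed
  moreover have "bs (rcs (g # gs) ins y0 F) s s2" using s1(1) s2(1) by (auto intro: bSeq)
  moreover have "\<forall>r<F. r \<notin> {y0..<y0 + length (g#gs)} \<longrightarrow> s2 r = s r" using s1(3) s2(3) by auto
  ultimately show ?case by blast
qed

lemma RC_Comp: "RC f \<Longrightarrow> \<forall>g\<in>set gs. RC g \<Longrightarrow> RC (Comp f gs)"
  unfolding RC_def[of "Comp f gs"]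
proof (intro allI impI)
  fix xs :: "nat list" and y :: nat and ins :: "nat list" and out fr :: nat and s :: "nat \<Rightarrow> nat"
  assume rf: "RC f" and rg: "\<forall>g\<in>set gs. RC g"
  assume ev: "rec_eval (Comp f gs) xs y" and m: "map s ins = xs" and sub: "set ins \<subseteq> {..<fr}" and o: "out < fr" "out \<notin> set ins"
  from ev obtain ys where e: "list_all2 (\<lambda>g y. rec_eval g xs y) gs ys" "rec_eval f ys y" by (rule ev_Comp) auto
  let ?F = "fr + length gs"
  obtain s1 where s1: "bs (rcs gs ins fr ?F) s s1" "map s1 [fr..<?F] = ys"
      "\<forall>r<?F. r \<notin> {fr..<?F} \<longrightarrow> s1 r = s r"
    using RCs[OF rg e(1) m sub, of ?F] by auto
  obtain s2 where s2: "bs (rc f [fr..<?F] out ?F) s1 s2" "s2 out = y" "\<forall>r<?F. r \<noteq> out \<longrightarrow> s2 r = s1 r"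
  proof -
    have "set [fr..<?F] \<subseteq> {..<?F}" "out < ?F" "out \<notin> set [fr..<?F]" using o by auto
    then show ?thesis using that rf e(2) s1(2) unfolding RC_def by blast
  qed
  show "\<exists>s'. bs (rc (Comp f gs) ins out fr) s s' \<and> s' out = y \<and> (\<forall>r<fr. r \<noteq> out \<longrightarrow> s' r = s r)"
    apply (rule exI[of _ s2])
    using s1 s2 by (auto intro: bSeq)
qed


lemma pr_chain: "rec_eval (PrimRec f g) (n # xs) z \<Longrightarrow>
  \<exists>Y. Y n = z \<and> rec_eval f xs (Y 0) \<and> (\<forall>j<n. rec_eval g (j # Y j # xs) (Y (Suc j)))"
proof (induction n arbitrary: z)
  case 0
  then have "rec_eval f xs z" by (auto elim: rec_eval.cases)
  then show ?case by (intro exI[of _ "\<lambda>_. z"]) auto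
next
  case (Suc n)
  from Suc.prems obtain y where y: "rec_eval (PrimRec f g) (n # xs) y" "rec_eval g (n # y # xs) z"
    by (auto elim: rec_eval.cases)
  from Suc.IH[OF y(1)] obtain Y where Y: "Y n = y" "rec_eval f xs (Y 0)"
    "\<forall>j<n. rec_eval g (j # Y j # xs) (Y (Suc j))" by blast
  show ?case
    apply (rule exI[of _ "Y(Suc n := z)"])
    using Y y(2) by (auto simp: less_Suc_eq)
qed

lemma pr_loop:
  assumes rg: "RC g" and ch: "\<forall>j<n. rec_eval g (j # Y j # xs') (Y (Suc j))" and sub: "set XS \<subseteq> {..<fr}"
  shows "u (fr+1) = j \<Longrightarrow> u (fr+2) = k \<Longrightarrow> u fr = Y j \<Longrightarrow> j + k = n \<Longrightarrow> map u XS = xs' \<Longrightarrow>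
    \<exists>u'. bs (CWhile (fr+2) (CSeq (rc g ((fr+1) # fr # XS) (fr+3) (fr+5))
            (CSeq (copy (fr+3) fr (fr+4)) (CSeq (CInc (fr+1)) (CDec (fr+2)))))) u u'
       \<and> u' fr = Y n \<and> (\<forall>r<fr. u' r = u r)"
proof (induction k arbitrary: j u)
  case 0
  then show ?case by (intro exI[of _ u]) (auto intro: bW0)
next
  case (Suc k)
  have jn: "j < n" using Suc.prems by simp
  have m0: "map u ((fr+1) # fr # XS) = j # Y j # xs'" using Suc.prems by simp
  have a0: "set ((fr+1) # fr # XS) \<subseteq> {..<fr+5}" "fr + 3 < fr + 5" "fr+3 \<notin> set ((fr+1) # fr # XS)"
    using sub by auto
  have e: "rec_eval g (j # Y j # xs') (Y (Suc j))" using ch jn by blast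
  obtain u1 where u1: "bs (rc g ((fr+1) # fr # XS) (fr+3) (fr+5)) u u1" "u1 (fr+3) = Y (Suc j)"
     "\<forall>r<fr+5. r \<noteq> fr+3 \<longrightarrow> u1 r = u r"
    using rg[unfolded RC_def, rule_format, OF e m0 a0] by blast
  let ?u2 = "u1(fr := u1 (fr+3), fr+4 := 0)"
  let ?u3 = "?u2(fr+1 := Suc (?u2 (fr+1)))"
  let ?u4 = "?u3(fr+2 := ?u3 (fr+2) - 1)"
  have B: "bs (CSeq (rc g ((fr+1) # fr # XS) (fr+3) (fr+5))
            (CSeq (copy (fr+3) fr (fr+4)) (CSeq (CInc (fr+1)) (CDec (fr+2))))) u ?u4"
    apply (rule bSeq[OF u1(1)])
    apply (rule bSeq[OF bs_copy])
    apply simp_all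
    apply (rule bSeq[OF bInc])
    apply (rule bs_eq[OF bDec]) by (auto simp: fun_eq_iff)
  have u4: "?u4 (fr+1) = Suc j" "?u4 (fr+2) = k" "?u4 fr = Y (Suc j)" "Suc j + k = n"
    "\<forall>r<fr. ?u4 r = u r"
    using u1 Suc.prems by auto
  have m4: "map ?u4 XS = xs'"
  proof -
    have "?u4 x = u x" if "x \<in> set XS" for x using that sub u4(5) by auto
    then show ?thesis using Suc.prems(5) by auto
  qed
  obtain u' where u': "bs (CWhile (fr+2) (CSeq (rc g ((fr+1) # fr # XS) (fr+3) (fr+5))
            (CSeq (copy (fr+3) fr (fr+4)) (CSeq (CInc (fr+1)) (CDec (fr+2)))))) ?u4 u'"
       "u' fr = Y n" "\<forall>r<fr. u' r = ?u4 r"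
    using Suc.IH[OF u4(1) u4(2) u4(3) u4(4) m4] by blast
  show ?case
    apply (rule exI[of _ u'])
    using bW1[OF _ B u'(1)] Suc.prems(2) u'(2,3) u4(5) by auto
qed

lemma RC_PR: "RC f \<Longrightarrow> RC g \<Longrightarrow> RC (PrimRec f g)"
  unfolding RC_def[of "PrimRec f g"]
proof (intro allI impI)
  fix xs :: "nat list" and y :: nat and ins :: "nat list" and out fr :: nat and s :: "nat \<Rightarrow> nat"
  assume rf: "RC f" and rg: "RC g"
  assume ev: "rec_eval (PrimRec f g) xs y" and m: "map s ins = xs" and sub: "set ins \<subseteq> {..<fr}" and o: "out < fr" "out \<notin> set ins"
  obtain n xs' where xs: "xs = n # xs'" using ev by (auto elim: rec_eval.cases)
  then obtain N XS where ins: "ins = N # XS" "s N = n" "map s XS = xs'" using m by (cases ins) auto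
  have subX: "set XS \<subseteq> {..<fr}" "N < fr" using sub ins by auto
  from pr_chain[OF ev[unfolded xs]] obtain Y where Y: "Y n = y" "rec_eval f xs' (Y 0)"
    "\<forall>j<n. rec_eval g (j # Y j # xs') (Y (Suc j))" by blast
  have a0: "set XS \<subseteq> {..<fr+5}" "fr < fr + 5" "fr \<notin> set XS" using subX by auto
  obtain s1 where s1: "bs (rc f XS fr (fr+5)) s s1" "s1 fr = Y 0" "\<forall>r<fr+5. r \<noteq> fr \<longrightarrow> s1 r = s r"
    using rf[unfolded RC_def, rule_format, OF Y(2) ins(3) a0] by blast
  let ?s2 = "s1(fr+1 := 0)"
  let ?s3 = "?s2(fr+2 := ?s2 N, fr+4 := 0)"
  have b3: "bs (CSeq (clr (fr+1)) (copy N (fr+2) (fr+4))) s1 ?s3"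
    apply (rule bSeq[OF bs_clr])
    apply (rule bs_copy) using subX by auto
  have s3: "?s3 (fr+1) = 0" "?s3 (fr+2) = n" "?s3 fr = Y 0" "\<forall>r<fr. ?s3 r = s r"
    using s1 ins subX by auto
  have m3: "map ?s3 XS = xs'"
  proof -
    have "?s3 x = s x" if "x \<in> set XS" for x
    proof -
      have "x < fr" using that subX by auto
      then show ?thesis using s3(4) by blast
    qed
    then have "map ?s3 XS = map s XS" by (subst map_eq_conv) blast
    then show ?thesis using ins(3) by (rule trans)
  qed
  obtain s4 where s4: "bs (CWhile (fr+2) (CSeq (rc g ((fr+1) # fr # XS) (fr+3) (fr+5))
            (CSeq (copy (fr+3) fr (fr+4)) (CSeq (CInc (fr+1)) (CDec (fr+2)))))) ?s3 s4"
       "s4 fr = Y n" "\<forall>r<fr. s4 r = ?s3 r"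
    using pr_loop[OF rg Y(3) subX(1) s3(1) s3(2) s3(3) _ m3] by auto
  let ?s5 = "s4(out := s4 fr, fr+4 := 0)"
  have b5: "bs (copy fr out (fr+4)) s4 ?s5" apply (rule bs_copy) using o by auto
  have "bs (rc (PrimRec f g) ins out fr) s ?s5"
    unfolding ins rc.simps list.sel
    apply (rule bSeq[OF s1(1)])
    apply (rule bSeq[OF bs_clr])
    apply (rule bSeq[OF bs_copy])
    using subX apply auto[3]
    apply (rule bSeq[OF s4(1)])
    by (rule b5)
  then show "\<exists>s'. bs (rc (PrimRec f g) ins out fr) s s' \<and> s' out = y \<and> (\<forall>r<fr. r \<noteq> out \<longrightarrow> s' r = s r)"
    apply (intro exI[of _ ?s5])
    using s4 s3(4) Y(1) o by auto
qed


lemma min_loop: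
  assumes rf: "RC f" and ev: "\<forall>m\<le>n. rec_eval f (m # xs) (V m)" and nz: "\<forall>m<n. V m \<noteq> 0" and z: "V n = 0"
    and sub: "set ins \<subseteq> {..<fr}"
  shows "n - j = k \<Longrightarrow> j \<le> n \<Longrightarrow> u fr = j \<Longrightarrow> u (fr+1) = V j \<Longrightarrow> map u ins = xs \<Longrightarrow>
    \<exists>u'. bs (CWhile (fr+1) (CSeq (CInc fr) (rc f (fr # ins) (fr+1) (fr+3)))) u u'
       \<and> u' fr = n \<and> (\<forall>r<fr. u' r = u r)"
proof (induction k arbitrary: j u)
  case 0
  then have "j = n" by simp
  then show ?case using 0 z by (intro exI[of _ u]) (auto intro: bW0)
next
  case (Suc k)
  have jn: "j < n" using Suc.prems by simp
  let ?u1 = "u(fr := Suc (u fr))"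
  have m0: "map ?u1 (fr # ins) = Suc j # xs"
  proof -
    have "?u1 x = u x" if "x \<in> set ins" for x using that sub by auto
    then have "map ?u1 ins = map u ins" by (subst map_eq_conv) blast
    then show ?thesis using Suc.prems by simp
  qed
  have a0: "set (fr # ins) \<subseteq> {..<fr+3}" "fr + 1 < fr + 3" "fr+1 \<notin> set (fr # ins)"
    using sub by auto
  have e: "rec_eval f (Suc j # xs) (V (Suc j))" using ev jn by simp
  obtain u2 where u2: "bs (rc f (fr # ins) (fr+1) (fr+3)) ?u1 u2" "u2 (fr+1) = V (Suc j)"
     "\<forall>r<fr+3. r \<noteq> fr+1 \<longrightarrow> u2 r = ?u1 r"
    using rf[unfolded RC_def, rule_format, OF e m0 a0] by blast
  have B: "bs (CSeq (CInc fr) (rc f (fr # ins) (fr+1) (fr+3))) u u2"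
    by (rule bSeq[OF bInc u2(1)])
  have u2f: "u2 fr = Suc j" "\<forall>r<fr. u2 r = u r" using u2(3) Suc.prems by auto
  have m2: "map u2 ins = xs"
  proof -
    have "u2 x = u x" if "x \<in> set ins" for x using that sub u2f(2) by auto
    then have "map u2 ins = map u ins" by (subst map_eq_conv) blast
    then show ?thesis using Suc.prems by simp
  qed
  obtain u' where u': "bs (CWhile (fr+1) (CSeq (CInc fr) (rc f (fr # ins) (fr+1) (fr+3)))) u2 u'"
       "u' fr = n" "\<forall>r<fr. u' r = u2 r"
  proof -
    have k: "n - Suc j = k" using Suc.prems(1) by simp
    have "Suc j \<le> n" using jn by simp
    from Suc.IH[OF k this u2f(1) u2(2) m2] show ?thesis using that by blast
  qed
  have "u (fr+1) \<noteq> 0" using Suc.prems nz jn by simp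
  then show ?case
    apply (intro exI[of _ u'])
    using bW1[OF _ B u'(1)] u'(2,3) u2f(2) by auto
qed

lemma RC_Min: "RC f \<Longrightarrow> RC (Minim f)"
  unfolding RC_def[of "Minim f"]
proof (intro allI impI)
  fix xs :: "nat list" and n :: nat and ins :: "nat list" and out fr :: nat and s :: "nat \<Rightarrow> nat"
  assume rf: "RC f"
  assume ev: "rec_eval (Minim f) xs n" and m: "map s ins = xs" and sub: "set ins \<subseteq> {..<fr}" and o: "out < fr" "out \<notin> set ins"
  from ev have e0: "rec_eval f (n # xs) 0" and e1: "\<forall>m<n. \<exists>y. y \<noteq> 0 \<and> rec_eval f (m # xs) y"
    by (auto elim: rec_eval.cases)
  define V where "V m = (if m < n then (SOME y. y \<noteq> 0 \<and> rec_eval f (m # xs) y) else 0)" for m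
  have Vn: "V n = 0" unfolding V_def by simp
  have Vnz: "\<forall>m<n. V m \<noteq> 0 \<and> rec_eval f (m # xs) (V m)"
  proof (intro allI impI)
    fix m assume "m < n"
    then show "V m \<noteq> 0 \<and> rec_eval f (m # xs) (V m)"
      unfolding V_def using someI_ex[OF e1[rule_format, OF \<open>m < n\<close>]] by simp
  qed
  have Vev: "\<forall>m\<le>n. rec_eval f (m # xs) (V m)"
    using Vnz Vn e0 by (metis le_neq_implies_less)
  let ?s1 = "s(fr := 0)"
  have m0: "map ?s1 (fr # ins) = 0 # xs"
  proof -
    have "?s1 x = s x" if "x \<in> set ins" for x using that sub by auto
    then have "map ?s1 ins = map s ins" by (subst map_eq_conv) blast
    then show ?thesis using m by simp
  qed
  have a0: "set (fr # ins) \<subseteq> {..<fr+3}" "fr + 1 < fr + 3" "fr+1 \<notin> set (fr # ins)"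
    using sub by auto
  have e: "rec_eval f (0 # xs) (V 0)" using Vev by simp
  obtain s2 where s2: "bs (rc f (fr # ins) (fr+1) (fr+3)) ?s1 s2" "s2 (fr+1) = V 0"
     "\<forall>r<fr+3. r \<noteq> fr+1 \<longrightarrow> s2 r = ?s1 r"
    using rf[unfolded RC_def, rule_format, OF e m0 a0] by blast
  have s2f: "s2 fr = 0" "\<forall>r<fr. s2 r = s r" using s2(3) by auto
  have m2: "map s2 ins = xs"
  proof -
    have "s2 x = s x" if "x \<in> set ins" for x using that sub s2f(2) by auto
    then have "map s2 ins = map s ins" by (subst map_eq_conv) blast
    then show ?thesis using m by simp
  qed
  obtain s3 where s3: "bs (CWhile (fr+1) (CSeq (CInc fr) (rc f (fr # ins) (fr+1) (fr+3)))) s2 s3"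
       "s3 fr = n" "\<forall>r<fr. s3 r = s2 r"
  proof -
    have nz: "\<forall>m<n. V m \<noteq> 0" using Vnz by blast
    from min_loop[OF rf Vev nz Vn sub, where j=0 and u=s2 and k=n] s2f(1) s2(2) m2
    show ?thesis using that by auto
  qed
  let ?s4 = "s3(out := s3 fr, fr+2 := 0)"
  have b4: "bs (copy fr out (fr+2)) s3 ?s4" apply (rule bs_copy) using o by auto
  have "bs (rc (Minim f) ins out fr) s ?s4"
    unfolding rc.simps
    apply (rule bSeq[OF bs_clr])
    apply (rule bSeq[OF s2(1)])
    apply (rule bSeq[OF s3(1)])
    by (rule b4)
  then show "\<exists>s'. bs (rc (Minim f) ins out fr) s s' \<and> s' out = n \<and> (\<forall>r<fr. r \<noteq> out \<longrightarrow> s' r = s r)"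
    apply (intro exI[of _ ?s4])
    using s3 s2f o by auto
qed

lemma RC_all: "RC f"
proof (induction f)
  case Zf then show ?case by (rule RC_Zf)
next
  case Sf then show ?case by (rule RC_Sf)
next
  case (Proj i) then show ?case by (rule RC_Proj)
next
  case (Comp f gs) then show ?case by (intro RC_Comp) auto
next
  case (PrimRec f g) then show ?case by (intro RC_PR)
next
  case (Minim f) then show ?case by (intro RC_Min)
qed



definition imp :: "tsl \<Rightarrow> tsl \<Rightarrow> tsl" where "imp a b = Neg (Conj a (Neg b))"
definition conjs :: "tsl list \<Rightarrow> tsl" where "conjs l = foldr Conj l TT"
definition glob :: "tsl \<Rightarrow> tsl" where "glob f = Neg (Until TT (Neg f))"
definition fin :: "tsl \<Rightarrow> tsl" where "fin f = Until TT f"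

lemma sat_imp[simp]: "sat \<rho> j (imp a b) \<longleftrightarrow> (sat \<rho> j a \<longrightarrow> sat \<rho> j b)"
  by (simp add: imp_def)
lemma sat_conjs[simp]: "sat \<rho> j (conjs l) \<longleftrightarrow> (\<forall>x\<in>set l. sat \<rho> j x)"
  by (induction l) (auto simp: conjs_def)
lemma sat_glob[simp]: "sat \<rho> j (glob f) \<longleftrightarrow> (\<forall>k\<ge>j. sat \<rho> k f)"
  by (auto simp: glob_def)
lemma sat_fin[simp]: "sat \<rho> j (fin f) \<longleftrightarrow> (\<exists>k\<ge>j. sat \<rho> k f)"
  by (auto simp: fin_def)

lemma over_imp[simp]: "tsl_over R I (imp a b) \<longleftrightarrow> tsl_over R I a \<and> tsl_over R I b"
  by (simp add: imp_def)
lemma over_conjs[simp]: "tsl_over R I (conjs l) \<longleftrightarrow> (\<forall>x\<in>set l. tsl_over R I x)"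
  by (induction l) (auto simp: conjs_def)
lemma over_glob[simp]: "tsl_over R I (glob f) \<longleftrightarrow> tsl_over R I f" by (simp add: glob_def)
lemma over_fin[simp]: "tsl_over R I (fin f) \<longleftrightarrow> tsl_over R I f" by (simp add: fin_def)

definition pcAt :: "nat \<Rightarrow> pf" where "pcAt k = PEq (RVar 0) (Cst (int k))"
definition zat :: "nat \<Rightarrow> pf" where "zat r = PEq (RVar (Suc r)) (Cst 0)"

fun ntm :: "instr \<Rightarrow> bool \<Rightarrow> tm \<Rightarrow> tm" where
  "ntm (IInc r j) b t = Inc t"
| "ntm (IDec r j1 j2) b t = (if b then t else Dec t)"
| "ntm (IJz r j1 j2) b t = t"

definition newt :: "instr \<Rightarrow> bool \<Rightarrow> nat \<Rightarrow> tm" where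
  "newt ins b i = (if i = ireg ins then ntm ins b (RVar (Suc i)) else RVar (Suc i))"

definition effect :: "nat \<Rightarrow> instr \<Rightarrow> bool \<Rightarrow> tsl" where
  "effect N ins b = conjs (Upd 0 (Cst (int (itgt ins b))) # map (\<lambda>i. Upd (Suc i) (newt ins b i)) [0..<N])"

definition instrf :: "nat \<Rightarrow> instr \<Rightarrow> tsl" where
  "instrf N ins = Conj (imp (Atom (zat (ireg ins))) (effect N ins True))
                       (imp (Neg (Atom (zat (ireg ins)))) (effect N ins False))"

definition stepf :: "nat \<Rightarrow> instr list \<Rightarrow> nat \<Rightarrow> tsl" where
  "stepf N P k = imp (Atom (pcAt k)) (instrf N (P ! k))"

definition REST :: "nat \<Rightarrow> instr list \<Rightarrow> tsl" where
  "REST N P = conjs ([Atom (pcAt 0)] @ map (\<lambda>i. Atom (zat i)) [1..<N] @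
      [glob (conjs (map (stepf N P) [0..<length P])), fin (Atom (pcAt (length P)))])"

definition phi :: "nat \<Rightarrow> instr list \<Rightarrow> nat \<Rightarrow> tsl" where
  "phi N P m = Conj (Atom (PEq (RVar 1) (Cst (int m)))) (REST N P)"

definition wf :: "nat \<Rightarrow> instr list \<Rightarrow> bool" where
  "wf N P \<longleftrightarrow> (\<forall>ins\<in>set P. ireg ins < N \<and> (\<forall>b. itgt ins b \<le> length P))"

definition s0 :: "nat \<Rightarrow> nat \<Rightarrow> nat" where "s0 m = (\<lambda>i. if i = 0 then m else 0)"

definition halts :: "instr list \<Rightarrow> (nat \<Rightarrow> nat) \<Rightarrow> bool" where
  "halts P s \<longleftrightarrow> (\<exists>n. fst (steps P n (0, s)) = length P)"

definition vl :: "nat \<times> (nat \<Rightarrow> nat) \<Rightarrow> val" where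
  "vl c = (\<lambda>x. if x = 0 then int (fst c) else int (snd c (x - 1)))"

definition agr :: "nat \<Rightarrow> val \<Rightarrow> nat \<times> (nat \<Rightarrow> nat) \<Rightarrow> bool" where
  "agr N v c \<longleftrightarrow> v 0 = int (fst c) \<and> (\<forall>i<N. v (Suc i) = int (snd c i))"

lemma teval_ntm: "v (Suc r) = int x \<Longrightarrow> b = (x = 0) \<Longrightarrow>
   teval v w (ntm ins b (RVar (Suc r))) = int (inew ins b x)"
  by (cases ins) auto

lemma steps_Suc2: "steps P (Suc k) c = step P (steps P k c)"
  using steps_add[of P k 1 c] by simp

lemma step_lt: "fst c < length P \<Longrightarrow> step P c =
   (itgt (P ! fst c) (snd c (ireg (P ! fst c)) = 0),
    (snd c)(ireg (P ! fst c) := inew (P ! fst c) (snd c (ireg (P ! fst c)) = 0) (snd c (ireg (P ! fst c)))))"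
  by (simp add: step_def Let_def)

lemma step_ge: "\<not> fst c < length P \<Longrightarrow> step P c = c"
  by (simp add: step_def)

lemma steps_le: "wf N P \<Longrightarrow> fst c \<le> length P \<Longrightarrow> fst (steps P k c) \<le> length P"
proof (induction k)
  case 0 then show ?case by simp
next
  case (Suc k)
  show ?case
  proof (cases "fst (steps P k c) < length P")
    case True
    then have "P ! fst (steps P k c) \<in> set P" by simp
    then show ?thesis using Suc.prems True unfolding steps_Suc2 by (simp add: step_lt wf_def)
  next
    case False then show ?thesis using Suc unfolding steps_Suc2 by (simp add: step_ge)
  qed
qed

lemma instr_sound:
  assumes w: "wf N P" and a: "agr N (fst (\<rho> j)) c" and pc: "fst c < length P"
    and s: "sat \<rho> j (instrf N (P ! fst c))"
  shows "agr N (fst (\<rho> (Suc j))) (step P c)"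
proof -
  let ?ins = "P ! fst c"
  let ?r = "ireg ?ins"
  let ?x = "snd c ?r"
  let ?b = "(?x = 0)"
  have rN: "?r < N" using w pc unfolding wf_def by auto
  have zr: "peval (fst (\<rho> j)) (snd (\<rho> j)) (zat ?r) \<longleftrightarrow> ?b"
    using a rN unfolding agr_def zat_def by auto
  have e: "sat \<rho> j (effect N ?ins ?b)"
    using s zr unfolding instrf_def by (cases ?b) auto
  have vr: "fst (\<rho> j) (Suc ?r) = int ?x" using a rN unfolding agr_def by auto
  have tn: "teval (fst (\<rho> j)) w (ntm ?ins ?b (RVar (Suc ?r))) = int (inew ?ins ?b ?x)" for w
    by (rule teval_ntm[of "fst (\<rho> j)", OF vr]) simp
  show ?thesis
    unfolding agr_def step_lt[OF pc]
  proof (intro conjI allI impI)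
    show "fst (\<rho> (Suc j)) 0 = int (fst (itgt ?ins ?b, (snd c)(?r := inew ?ins ?b ?x)))"
      using e unfolding effect_def by simp
    fix i assume i: "i < N"
    have "sat \<rho> j (Upd (Suc i) (newt ?ins ?b i))" using e i unfolding effect_def by auto
    then have u: "fst (\<rho> (Suc j)) (Suc i) = teval (fst (\<rho> j)) (snd (\<rho> j)) (newt ?ins ?b i)" by simp
    show "fst (\<rho> (Suc j)) (Suc i) = int (snd (itgt ?ins ?b, (snd c)(?r := inew ?ins ?b ?x)) i)"
    proof (cases "i = ?r")
      case True
      then show ?thesis using u tn unfolding newt_def by simp
    next
      case False
      then show ?thesis using u a i unfolding newt_def agr_def by simp
    qed
  qed
qed

lemma instr_complete:
  assumes w: "wf N P" and a: "fst (\<rho> j) = vl c" and a2: "fst (\<rho> (Suc j)) = vl (step P c)"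
    and pc: "fst c < length P"
  shows "sat \<rho> j (instrf N (P ! fst c))"
proof -
  let ?ins = "P ! fst c"
  let ?r = "ireg ?ins"
  let ?x = "snd c ?r"
  let ?b = "(?x = 0)"
  have zr: "peval (fst (\<rho> j)) (snd (\<rho> j)) (zat ?r) \<longleftrightarrow> ?b"
    using a unfolding vl_def zat_def by auto
  have vr: "fst (\<rho> j) (Suc ?r) = int ?x" using a unfolding vl_def by auto
  have tn: "teval (fst (\<rho> j)) w (ntm ?ins ?b (RVar (Suc ?r))) = int (inew ?ins ?b ?x)" for w
    by (rule teval_ntm[of "fst (\<rho> j)", OF vr]) simp
  have e0: "sat \<rho> j (Upd 0 (Cst (int (itgt ?ins ?b))))" using a2 pc by (simp add: vl_def step_lt)
  have e1: "sat \<rho> j (Upd (Suc i) (newt ?ins ?b i))" for i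
  proof (cases "i = ?r")
    case True
    then show ?thesis using a2 pc tn unfolding newt_def by (simp add: vl_def step_lt)
  next
    case False
    then show ?thesis using a a2 pc unfolding newt_def by (simp add: vl_def step_lt)
  qed
  have e: "sat \<rho> j (effect N ?ins ?b)"
    unfolding effect_def using e0 e1 by auto
  show ?thesis using e zr unfolding instrf_def by (cases ?b) auto
qed


lemma real_halts:
  assumes w: "wf N P" and N: "1 \<le> N" and r: "realizable (set [0..<Suc N]) (set []) (phi N P m)"
  shows "halts P (s0 m)"
proof -
  from r obtain Q q0 Ps r0 \<delta> \<mu> where "realizes q0 Ps r0 \<delta> \<mu> (phi N P m)"
    unfolding realizable_def by blast
  then have "sat (\<lambda>k. (snd (mrun q0 Ps r0 \<delta> \<mu> (\<lambda>_ _. 0) k), (\<lambda>_ _. 0) k)) 0 (phi N P m)"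
    unfolding realizes_def by blast
  then obtain \<rho> :: "nat \<Rightarrow> val \<times> val" where sat: "sat \<rho> 0 (phi N P m)" by blast
  define c where "c k = steps P k (0, s0 m)" for k
  have A1: "fst (\<rho> 0) 1 = int m" and A2: "fst (\<rho> 0) 0 = 0"
    and A3: "\<forall>i\<in>set [1..<N]. fst (\<rho> 0) (Suc i) = 0"
    and G: "\<forall>k k'. k' < length P \<longrightarrow> fst (\<rho> k) 0 = int k' \<longrightarrow> sat \<rho> k (instrf N (P ! k'))"
    and F: "\<exists>k. fst (\<rho> k) 0 = int (length P)"
    using sat unfolding phi_def REST_def by (auto simp: pcAt_def zat_def stepf_def)
  have ag0: "agr N (fst (\<rho> 0)) (c 0)"
    unfolding agr_def c_def using A1 A2 A3 by (auto simp: s0_def)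
  have claim: "(\<forall>j<k. fst (\<rho> j) 0 \<noteq> int (length P)) \<longrightarrow> agr N (fst (\<rho> k)) (c k)" for k
  proof (induction k)
    case 0 then show ?case using ag0 by simp
  next
    case (Suc k)
    show ?case
    proof
      assume h: "\<forall>j<Suc k. fst (\<rho> j) 0 \<noteq> int (length P)"
      then have ak: "agr N (fst (\<rho> k)) (c k)" using Suc.IH by simp
      have le: "fst (c k) \<le> length P" unfolding c_def by (rule steps_le[OF w]) simp
      have "fst (\<rho> k) 0 = int (fst (c k))" using ak unfolding agr_def by simp
      moreover have "fst (\<rho> k) 0 \<noteq> int (length P)" using h by simp
      ultimately have lt: "fst (c k) < length P" using le by (metis le_neq_implies_less)
      have "sat \<rho> k (instrf N (P ! fst (c k)))" using G lt \<open>fst (\<rho> k) 0 = int (fst (c k))\<close> by blast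
      from instr_sound[OF w ak lt this] show "agr N (fst (\<rho> (Suc k))) (c (Suc k))"
        unfolding c_def steps_Suc2 .
    qed
  qed
  from F obtain k where k: "fst (\<rho> k) 0 = int (length P)" "\<forall>j<k. fst (\<rho> j) 0 \<noteq> int (length P)"
    using exists_least_iff[of "\<lambda>k. fst (\<rho> k) 0 = int (length P)"] by blast
  then have "agr N (fst (\<rho> k)) (c k)" using claim by blast
  then have "fst (c k) = length P" using k(1) unfolding agr_def by simp
  then show ?thesis unfolding halts_def c_def by blast
qed

definition muF :: "nat \<Rightarrow> instr list \<Rightarrow> pf set \<Rightarrow> nat \<Rightarrow> tm" where
  "muF N P S x = (if \<exists>k<length P. pcAt k \<in> S then
     (let k = (SOME k. k < length P \<and> pcAt k \<in> S); ins = P ! k; b = (zat (ireg ins) \<in> S) in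
      if x = 0 then Cst (int (itgt ins b)) else newt ins b (x - 1))
    else RVar x)"

definition Pset :: "nat \<Rightarrow> instr list \<Rightarrow> pf set" where
  "Pset N P = pcAt ` {..<length P} \<union> zat ` {..<N}"

lemma mu_step:
  assumes w: "wf N P" and le: "fst c \<le> length P"
  shows "(\<lambda>x. teval (vl c) w (muF N P {p \<in> Pset N P. peval (vl c) w p} x)) = vl (step P c)"
proof -
  let ?S = "{p \<in> Pset N P. peval (vl c) w p}"
  have pcS: "pcAt k \<in> ?S \<longleftrightarrow> k < length P \<and> k = fst c" for k
    by (auto simp: Pset_def pcAt_def zat_def vl_def)
  show ?thesis
  proof (cases "fst c < length P")
    case True
    let ?ins = "P ! fst c"
    let ?r = "ireg ?ins"
    let ?b = "snd c ?r = 0"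
    have ex: "\<exists>k<length P. pcAt k \<in> ?S" using True pcS by blast
    have sm: "(SOME k. k < length P \<and> pcAt k \<in> ?S) = fst c"
      using pcS True by (intro some_equality) auto
    have rN: "?r < N" using w True unfolding wf_def by auto
    have zb: "(zat ?r \<in> ?S) = ?b" using rN by (auto simp: Pset_def zat_def vl_def pcAt_def)
    have vr: "vl c (Suc ?r) = int (snd c ?r)" by (simp add: vl_def)
    have tn: "teval (vl c) w (ntm ?ins ?b (RVar (Suc ?r))) = int (inew ?ins ?b (snd c ?r))"
      by (rule teval_ntm[of "vl c", OF vr]) simp
    show ?thesis
    proof (rule ext)
      fix x
      show "teval (vl c) w (muF N P ?S x) = vl (step P c) x"
      proof (cases x)
        case 0 then show ?thesis using ex sm zb True by (simp add: muF_def Let_def step_lt vl_def)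
      next
        case (Suc i)
        show ?thesis
        proof (cases "i = ?r")
          case True
          then show ?thesis using ex sm zb \<open>fst c < length P\<close> Suc tn
            by (simp add: muF_def Let_def step_lt vl_def newt_def)
        next
          case False
          then show ?thesis using ex sm zb \<open>fst c < length P\<close> Suc
            by (simp add: muF_def Let_def step_lt vl_def newt_def)
        qed
      qed
    qed
  next
    case False
    then have ne: "\<not> (\<exists>k<length P. pcAt k \<in> ?S)" using pcS by auto
    have "muF N P ?S x = RVar x" for x unfolding muF_def using ne by (simp only: if_False)
    then show ?thesis using False by (auto simp: step_ge vl_def)
  qed
qed

lemma run_vl:
  assumes w: "wf N P"
  shows "snd (mrun 0 (Pset N P) (vl (0, s0 m)) (\<lambda>_ _. 0) (\<lambda>_. muF N P) ins k) = vl (steps P k (0, s0 m))"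
proof (induction k)
  case 0 then show ?case by simp
next
  case (Suc k)
  have le: "fst (steps P k (0, s0 m)) \<le> length P" by (rule steps_le[OF w]) simp
  show ?case unfolding steps_Suc2 using mu_step[OF w le, of "ins k"] Suc.IH
    by (simp add: Let_def)
qed

lemma tm_over_ntm[simp]: "tm_over R I (ntm ins b t) = tm_over R I t"
  by (cases ins) auto

lemma halts_real:
  assumes w: "wf N P" and N: "1 \<le> N" and h: "halts P (s0 m)"
  shows "realizable (set [0..<Suc N]) (set []) (phi N P m)"
proof -
  let ?R = "set [0..<Suc N]"
  have mealy: "is_mealy ?R (set []) {0} 0 (Pset N P) (vl (0, s0 m)) (\<lambda>_ _. 0) (\<lambda>_. muF N P)"
    unfolding is_mealy_def
  proof (intro conjI ballI allI impI)
    show "finite (Pset N P)" by (simp add: Pset_def)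
    fix p assume "p \<in> Pset N P"
    then show "pf_over ?R (set []) p" by (auto simp: Pset_def pcAt_def zat_def)
  next
    fix q S r assume r: "r \<in> ?R"
    show "tm_over ?R (set []) (muF N P S r)"
      using r by (auto simp: muF_def Let_def newt_def)
  qed simp_all
  have real: "realizes 0 (Pset N P) (vl (0, s0 m)) (\<lambda>_ _. 0) (\<lambda>_. muF N P) (phi N P m)"
    unfolding realizes_def
  proof
    fix ins :: "nat \<Rightarrow> val"
    define \<rho> where "\<rho> k = (snd (mrun 0 (Pset N P) (vl (0, s0 m)) (\<lambda>_ _. 0) (\<lambda>_. muF N P) ins k), ins k)" for k
    define c where "c k = steps P k (0, s0 m)" for k
    have fr: "fst (\<rho> k) = vl (c k)" for k unfolding \<rho>_def c_def using run_vl[OF w] by simp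
    have cs: "c (Suc k) = step P (c k)" for k unfolding c_def by (rule steps_Suc2)
    have fs: "fst (\<rho> (Suc k)) = vl (step P (c k))" for k using fr[of "Suc k"] cs[of k] by simp
    have g: "sat \<rho> k (stepf N P k')" if "k' < length P" for k k'
    proof -
      have "sat \<rho> k (instrf N (P ! k'))" if "fst (c k) = k'"
        using instr_complete[OF w fr[of k] fs[of k]] \<open>k' < length P\<close> that by blast
      moreover have "sat \<rho> k (Atom (pcAt k')) \<Longrightarrow> fst (c k) = k'"
        using fr[of k] by (simp add: pcAt_def vl_def)
      ultimately show ?thesis unfolding stepf_def by auto
    qed
    from h obtain n where n: "fst (c n) = length P" unfolding halts_def c_def by blast
    have fn: "fst (\<rho> n) 0 = int (length P)" using fr[of n] n by (simp add: vl_def)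
    have "sat \<rho> 0 (phi N P m)"
      unfolding phi_def REST_def using g fr[of 0] fn
      by (auto simp: pcAt_def zat_def vl_def c_def s0_def)
    then show "sat (\<lambda>k. (snd (mrun 0 (Pset N P) (vl (0, s0 m)) (\<lambda>_ _. 0) (\<lambda>_. muF N P) ins k), ins k)) 0 (phi N P m)"
      unfolding \<rho>_def .
  qed
  show ?thesis unfolding realizable_def using mealy real by blast
qed

lemma tm_over_newt: "Suc i \<in> R \<Longrightarrow> tm_over R I (newt ins b i)"
  by (auto simp: newt_def)
lemma tm_over_newt2: "i < N \<Longrightarrow> tm_over (insert N {0..<N}) I (newt ins b i)"
  by (auto simp: newt_def)

lemma phi_over:
  assumes w: "wf N P" and N: "1 \<le> N"
  shows "tsl_over (set [0..<Suc N]) (set []) (phi N P m)"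
proof -
  have "tsl_over (set [0..<Suc N]) (set []) (stepf N P k)" if "k < length P" for k
  proof -
    have "ireg (P ! k) < N" using w that unfolding wf_def by auto
    then show ?thesis
      by (auto simp: stepf_def instrf_def effect_def pcAt_def zat_def tm_over_newt2)
  qed
  then show ?thesis using N unfolding phi_def REST_def by (auto simp: pcAt_def zat_def)
qed



fun creg :: "cmd \<Rightarrow> nat" where
  "creg (CInc r) = Suc r" | "creg (CDec r) = Suc r" | "creg (CSeq a b) = max (creg a) (creg b)"
| "creg (CWhile r c) = max (Suc r) (creg c)"

lemma comp_regs: "ins \<in> set (comp c k) \<Longrightarrow> ireg ins < creg c"
  by (induction c arbitrary: k) (auto simp: less_max_iff_disj)

lemma comp_tgts: "ins \<in> set (comp c k) \<Longrightarrow> itgt ins b \<le> k + clen c"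
  by (induction c arbitrary: k) fastforce+

lemma creg_incs: "creg (incs r k) \<le> Suc r"
  by (induction k) (auto simp: skip_def)

lemma creg_setc[simp]: "creg (setc r k) = Suc r"
  using creg_incs[of r k] by (simp add: setc_def clr_def)

definition pstep :: "nat \<Rightarrow> cmd" where
  "pstep k = CSeq (setc 4 k) (CSeq (pair 4 3 5 6 7) (copy 5 3 7))"

lemma pstep_ok: "\<exists>s'. bs (pstep k) s s' \<and> s' 3 = prod_encode (k, s 3) \<and> (\<forall>r. r \<notin> {3,4,5,6,7} \<longrightarrow> s' r = s r)"
proof -
  obtain s2 where s2: "bs (pair 4 3 5 6 7) (s(4 := k)) s2" "s2 5 = prod_encode ((s(4 := k)) 4, (s(4 := k)) 3)"
    "\<forall>r. r \<notin> {5, 6, 7} \<longrightarrow> s2 r = (s(4 := k)) r"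
    using bs_pair[of 4 3 5 6 7 "s(4 := k)"] by auto
  have "bs (pstep k) s (s2(3 := s2 5, 7 := 0))"
    unfolding pstep_def
    apply (rule bSeq[OF bs_setc])
    apply (rule bSeq[OF s2(1)])
    by (rule bs_copy) auto
  then show ?thesis apply (intro exI[of _ "s2(3 := s2 5, 7 := 0)"]) using s2 by auto
qed

definition pux :: cmd where "pux = CSeq (pair 3 0 5 6 7) (copy 5 3 7)"

lemma pux_ok: "\<exists>s'. bs pux s s' \<and> s' 3 = prod_encode (s 3, s 0) \<and> (\<forall>r. r \<notin> {3,5,6,7} \<longrightarrow> s' r = s r)"
proof -
  obtain s2 where s2: "bs (pair 3 0 5 6 7) s s2" "s2 5 = prod_encode (s 3, s 0)"
    "\<forall>r. r \<notin> {5, 6, 7} \<longrightarrow> s2 r = s r"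
    using bs_pair[of 3 0 5 6 7 s] by auto
  have "bs pux s (s2(3 := s2 5, 7 := 0))"
    unfolding pux_def
    apply (rule bSeq[OF s2(1)])
    by (rule bs_copy) auto
  then show ?thesis apply (intro exI[of _ "s2(3 := s2 5, 7 := 0)"]) using s2 by auto
qed

definition h0 :: cmd where "h0 = CSeq (clr 3) (CSeq (addp 0 3 7) (addp 0 3 7))"

lemma h0_ok: "\<exists>s'. bs h0 s s' \<and> s' 3 = 2 * s 0 \<and> (\<forall>r. r \<notin> {3,7} \<longrightarrow> s' r = s r)"
proof -
  have "bs h0 s (s(3 := 0, 3 := s 0, 7 := 0, 3 := s 0 + s 0, 7 := 0))"
    unfolding h0_def
    apply (rule bSeq[OF bs_clr])
    apply (rule bSeq[OF bs_eq[OF bs_addp]])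
    apply auto[4]
    apply (rule bs_eq[OF bs_addp])
    by auto
  then show ?thesis by (intro exI) auto
qed

definition hcode :: "nat \<Rightarrow> cmd" where
  "hcode L = CSeq h0 (CSeq (pstep 2) (CSeq (pstep (prod_encode (0, 1))) (CSeq (pstep 1) (CSeq (pstep 0)
     (CSeq pux (CSeq (pstep 5) (CSeq (pstep 0) (CSeq (pstep L) (copy 3 1 7)))))))))"

definition hv :: "nat \<Rightarrow> nat \<Rightarrow> nat" where
  "hv L x = prod_encode (L, prod_encode (0, prod_encode (5, prod_encode (prod_encode (0,
     prod_encode (1, prod_encode (prod_encode (0, 1), prod_encode (2, 2 * x)))), x))))"

lemma hcode_ok: "\<exists>s'. bs (hcode L) s s' \<and> s' 1 = hv L (s 0)"
proof -
  obtain s1 where s1: "bs h0 s s1" "s1 3 = 2 * s 0" "s1 0 = s 0" using h0_ok[of s] by auto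
  obtain s2 where s2: "bs (pstep 2) s1 s2" "s2 3 = prod_encode (2, s1 3)" "s2 0 = s1 0" using pstep_ok[of 2 s1] by auto
  obtain s3 where s3: "bs (pstep (prod_encode (0, 1))) s2 s3" "s3 3 = prod_encode (prod_encode (0, 1), s2 3)" "s3 0 = s2 0"
    using pstep_ok[of "prod_encode (0, 1)" s2] by auto
  obtain s4 where s4: "bs (pstep 1) s3 s4" "s4 3 = prod_encode (1, s3 3)" "s4 0 = s3 0" using pstep_ok[of 1 s3] by auto
  obtain s5 where s5: "bs (pstep 0) s4 s5" "s5 3 = prod_encode (0, s4 3)" "s5 0 = s4 0" using pstep_ok[of 0 s4] by auto
  obtain s6 where s6: "bs pux s5 s6" "s6 3 = prod_encode (s5 3, s5 0)" "s6 0 = s5 0" using pux_ok[of s5] by auto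
  obtain s7 where s7: "bs (pstep 5) s6 s7" "s7 3 = prod_encode (5, s6 3)" using pstep_ok[of 5 s6] by auto
  obtain s8 where s8: "bs (pstep 0) s7 s8" "s8 3 = prod_encode (0, s7 3)" using pstep_ok[of 0 s7] by auto
  obtain s9 where s9: "bs (pstep L) s8 s9" "s9 3 = prod_encode (L, s8 3)" using pstep_ok[of L s8] by auto
  have b10: "bs (copy 3 1 7) s9 (s9(1 := s9 3, 7 := 0))" by (rule bs_copy) auto
  have "bs (hcode L) s (s9(1 := s9 3, 7 := 0))"
    unfolding hcode_def
    using s1(1) s2(1) s3(1) s4(1) s5(1) s6(1) s7(1) s8(1) s9(1) b10 by (meson bSeq)
  moreover have "(s9(1 := s9 3, 7 := 0)) 1 = hv L (s 0)"
    using s1 s2 s3 s4 s5 s6 s7 s8 s9 by (simp add: hv_def)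
  ultimately show ?thesis by blast
qed


definition Nf :: "recf \<Rightarrow> nat" where "Nf f = max 11 (creg (rc f [1] 2 10))"
definition Lf :: "recf \<Rightarrow> nat" where "Lf f = list_encode [0..<Suc (Nf f)]"
definition Cf :: "recf \<Rightarrow> cmd" where "Cf f = CSeq (hcode (Lf f)) (rc f [1] 2 10)"
definition Pf :: "recf \<Rightarrow> instr list" where
  "Pf f = comp (Cf f) 0 @ [IJz 2 (clen (Cf f) + 2) (clen (Cf f) + 1), IJz 2 (clen (Cf f) + 1) (clen (Cf f) + 1)]"

lemma creg_hcode: "creg (hcode L) \<le> 8"
  by (simp add: hcode_def pstep_def pux_def h0_def pair_def copy_def addp_def clr_def)

lemma wf_Pf: "wf (Nf f) (Pf f)"
  unfolding wf_def
proof
  fix ins assume i: "ins \<in> set (Pf f)"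
  have cr: "creg (Cf f) \<le> Nf f" using creg_hcode[of "Lf f"] by (simp add: Cf_def Nf_def)
  show "ireg ins < Nf f \<and> (\<forall>b. itgt ins b \<le> length (Pf f))"
  proof (cases "ins \<in> set (comp (Cf f) 0)")
    case True
    have l: "length (Pf f) = clen (Cf f) + 2" by (simp add: Pf_def)
    have "ireg ins < Nf f" using comp_regs[OF True] cr by linarith
    moreover have "itgt ins b \<le> length (Pf f)" for b using comp_tgts[OF True, of b] l by simp
    ultimately show ?thesis by blast
  next
    case False
    then show ?thesis using i by (auto simp: Pf_def Nf_def)
  qed
qed

lemma at_Pf: "at (Pf f) 0 (Cf f)"
  unfolding at_def Pf_def by (auto simp: nth_append)

lemma halted_stay: "\<not> fst c < length P \<Longrightarrow> steps P j c = c"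
  by (induction j) (auto simp: step_ge)

lemma loop_stay: "P ! l = IJz r l l \<Longrightarrow> l < length P \<Longrightarrow> steps P j (l, s) = (l, s)"
  by (induction j) (auto simp: step_def)

theorem main_contra:
  assumes H: "\<forall>Rs Is \<phi>. tsl_over (set Rs) (set Is) \<phi> \<longrightarrow>
            rec_eval f [enc_instance Rs Is \<phi>] (if realizable (set Rs) (set Is) \<phi> then 1 else 0)"
  shows False
proof -
  let ?N = "Nf f" and ?P = "Pf f" and ?C = "Cf f" and ?L = "Lf f"
  let ?LC = "clen ?C"
  define e where "e = enc_tsl (REST ?N ?P)"
  let ?\<phi> = "phi ?N ?P e"
  have w: "wf ?N ?P" by (rule wf_Pf)
  have N1: "1 \<le> ?N" by (simp add: Nf_def)
  have ov: "tsl_over (set [0..<Suc ?N]) (set []) ?\<phi>" by (rule phi_over[OF w N1])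
  define v where "v = (if realizable (set [0..<Suc ?N]) (set []) ?\<phi> then 1 else (0::nat))"
  have ev: "rec_eval f [enc_instance [0..<Suc ?N] [] ?\<phi>] v"
    using H ov unfolding v_def by blast
  have enc: "enc_instance [0..<Suc ?N] [] ?\<phi> = hv ?L e"
    by (simp add: enc_instance_def phi_def hv_def e_def Lf_def int_encode_def sum_encode_def)
  obtain s1 where s1: "bs (hcode ?L) (s0 e) s1" "s1 1 = hv ?L e"
    using hcode_ok[of ?L "s0 e"] by (auto simp: s0_def)
  have a: "map s1 [1] = [hv ?L e]" "set [1::nat] \<subseteq> {..<10}" "(2::nat) < 10" "(2::nat) \<notin> set [1]"
    using s1 by auto
  obtain s2 where s2: "bs (rc f [1] 2 10) s1 s2" "s2 2 = v"
    using RC_all[of f, unfolded RC_def, rule_format, OF ev[unfolded enc], where ins="[1]" and out=2 and fr=10 and s=s1, OF a] by blast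
  have bC: "bs ?C (s0 e) s2" unfolding Cf_def using s1(1) s2(1) by (rule bSeq)
  obtain n where n: "steps ?P n (0, s0 e) = (?LC, s2)"
    using comp_correct[OF bC at_Pf] by auto
  have lenP: "length ?P = ?LC + 2" by (simp add: Pf_def)
  have P1: "?P ! ?LC = IJz 2 (?LC + 2) (?LC + 1)" by (simp add: Pf_def nth_append)
  have P2: "?P ! (?LC + 1) = IJz 2 (?LC + 1) (?LC + 1)" by (simp add: Pf_def nth_append)
  have st1: "steps ?P (Suc n) (0, s0 e) = step ?P (?LC, s2)" unfolding steps_Suc2 using n by simp
  show False
  proof (cases "realizable (set [0..<Suc ?N]) (set []) ?\<phi>")
    case True
    then have v1: "s2 2 = 1" using s2(2) v_def by simp
    have h: "halts ?P (s0 e)" by (rule real_halts[OF w N1 True])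
    then obtain k where k: "fst (steps ?P k (0, s0 e)) = length ?P" unfolding halts_def by blast
    have "step ?P (?LC, s2) = (?LC + 1, s2)" using P1 lenP v1 by (simp add: step_lt fun_upd_idem)
    then have a1: "steps ?P (Suc n) (0, s0 e) = (?LC + 1, s2)" using st1 by simp
    show False
    proof (cases "k \<le> n")
      case True
      have "steps ?P n (0, s0 e) = steps ?P (n - k) (steps ?P k (0, s0 e))"
        using steps_add[of ?P k "n - k"] True by simp
      also have "\<dots> = steps ?P k (0, s0 e)" by (rule halted_stay) (use k in simp)
      finally have "fst (steps ?P n (0, s0 e)) = length ?P" using k by simp
      then show False using n lenP by simp
    next
      case False
      then have "steps ?P k (0, s0 e) = steps ?P (k - Suc n) (steps ?P (Suc n) (0, s0 e))"
        using steps_add[of ?P "Suc n" "k - Suc n"] by simp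
      also have "\<dots> = (?LC + 1, s2)" unfolding a1 by (rule loop_stay[OF P2]) (simp add: lenP)
      finally show False using k lenP by simp
    qed
  next
    case False
    then have v0: "s2 2 = 0" using s2(2) v_def by simp
    have "step ?P (?LC, s2) = (?LC + 2, s2)" using P1 lenP v0 by (simp add: step_lt fun_upd_idem)
    then have "steps ?P (Suc n) (0, s0 e) = (?LC + 2, s2)" using st1 by simp
    then have "halts ?P (s0 e)" unfolding halts_def using lenP by (metis fst_conv)
    then have "realizable (set [0..<Suc ?N]) (set []) ?\<phi>" by (rule halts_real[OF w N1])
    then show False using False by simp
  qed
qed

theorem mainTheorem1:
  shows "\<not> (\<exists>f. \<forall>Rs Is \<phi>. tsl_over (set Rs) (set Is) \<phi> \<longrightarrow>
            rec_eval f [enc_instance Rs Is \<phi>] (if realizable (set Rs) (set Is) \<phi> then 1 else 0))"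
  using main_contra by blast


end
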